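(* Let $R$ be a ring and $I,J$ ideals of $R$ with $I\cap J=0$. Then $[I]\cap[J]\subseteq\mathrm{Nil}_2(R)$.
   Context: Rings are commutative with unit. $\widehat\Theta(R)$ is the free monoid on $\mathrm{Der}(R)$, acting on $R$ by composition of derivations. For an ideal $I$, $[I]:=\sum_{\theta\in\widehat\Theta(R)}\theta(I)$, the smallest ideal containing $I$ stable under all derivations of $R$. $\mathrm{Nil}_2(R):=\{x\in R: x^2=0\}$. *)

theory Defs
  imports Main
begin

definition is_ideal :: "'a::comm_ring_1 set \<Rightarrow> bool" where
  "is_ideal I \<longleftrightarrow> 0 \<in> I \<and> (\<forall>x\<in>I. \<forall>y\<in>I. x + y \<in> I) \<and> (\<forall>x\<in>I. - x \<in> I)
      \<and> (\<forall>r x. x \<in> I \<longrightarrow> r * x \<in> I)"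

definition Der :: "('a::comm_ring_1 \<Rightarrow> 'a) set" where
  "Der = {D. (\<forall>x y. D (x + y) = D x + D y) \<and> (\<forall>x y. D (x * y) = x * D y + D x * y)}"

text \<open>Elements of the free monoid on Der(R) are words (lists) of derivations;
  a word acts on R by composition of its letters (the empty word acts as identity).\<close>
definition word_action :: "('a \<Rightarrow> 'a) list \<Rightarrow> 'a \<Rightarrow> 'a" where
  "word_action ds = foldr (\<circ>) ds id"

definition Theta_hat :: "('a::comm_ring_1 \<Rightarrow> 'a) list set" where
  "Theta_hat = {ds. set ds \<subseteq> Der}"

text \<open>[I] = sum over all theta in Theta_hat of theta(I): the set of finite sums of
  elements theta(x) with theta a word in derivations and x in I.\<close>
inductive_set bracket :: "'a::comm_ring_1 set \<Rightarrow> 'a set" for I where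
  zero: "0 \<in> bracket I"
| gen: "\<theta> \<in> Theta_hat \<Longrightarrow> x \<in> I \<Longrightarrow> word_action \<theta> x \<in> bracket I"
| add: "a \<in> bracket I \<Longrightarrow> b \<in> bracket I \<Longrightarrow> a + b \<in> bracket I"

definition Nil2 :: "'a::comm_ring_1 set" where
  "Nil2 = {x. x ^ 2 = 0}"

end

theory Submission
  imports Defs
begin

lemma wa_Cons[simp]: "word_action (D # ds) x = D (word_action ds x)"
  by (simp add: word_action_def)

lemma wa_Nil[simp]: "word_action [] x = x"
  by (simp add: word_action_def)

lemma Der_zero: "D \<in> Der \<Longrightarrow> D 0 = 0"
proof -
  assume "D \<in> Der"
  then have "D (0 + 0) = D 0 + D 0" unfolding Der_def by blast
  then show ?thesis by simp
qed

lemma Der_mult: "D \<in> Der \<Longrightarrow> D (x * y) = x * D y + D x * y"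
  by (simp add: Der_def)

lemma ideal_multR: "is_ideal K \<Longrightarrow> x \<in> K \<Longrightarrow> x * r \<in> K"
  unfolding is_ideal_def by (metis mult.commute)

lemma ideal_neg: "is_ideal K \<Longrightarrow> x \<in> K \<Longrightarrow> - x \<in> K"
  unfolding is_ideal_def by blast

lemma move:
  fixes x y :: "'a::comm_ring_1"
  assumes K: "is_ideal K" and xK: "x \<in> K"
    and IH: "\<And>\<theta>' \<phi>'. \<theta>' \<in> Theta_hat \<Longrightarrow> \<phi>' \<in> Theta_hat \<Longrightarrow>
              length \<theta>' + length \<phi>' < n \<Longrightarrow> word_action \<theta>' x * word_action \<phi>' y = 0"
  shows "\<theta> \<in> Theta_hat \<Longrightarrow> \<phi> \<in> Theta_hat \<Longrightarrow> length \<theta> + length \<phi> = n \<Longrightarrow>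
         word_action \<theta> x * word_action \<phi> y \<in> K"
proof (induction \<theta> arbitrary: \<phi>)
  case Nil
  then show ?case using ideal_multR[OF K xK] by simp
next
  case (Cons D th)
  have D: "D \<in> Der" and th: "th \<in> Theta_hat" using Cons.prems by (auto simp: Theta_hat_def)
  have Dphi: "D # \<phi> \<in> Theta_hat" using D Cons.prems by (auto simp: Theta_hat_def)
  let ?a = "word_action th x" and ?b = "word_action \<phi> y"
  have z: "?a * ?b = 0" using IH[OF th Cons.prems(2)] Cons.prems(3) by simp
  have "D (?a * ?b) = ?a * D ?b + D ?a * ?b" by (rule Der_mult[OF D])
  then have eq: "D ?a * ?b = - (?a * D ?b)" using z Der_zero[OF D]
    by (simp add: eq_neg_iff_add_eq_0 add.commute)
  have "?a * word_action (D # \<phi>) y \<in> K"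
    using Cons.IH[OF th Dphi] Cons.prems(3) by simp
  then have "- (?a * D ?b) \<in> K" using ideal_neg[OF K] by simp
  then show ?case using eq by simp
qed

lemma prod_zero:
  fixes x y :: "'a::comm_ring_1"
  assumes I: "is_ideal I" and J: "is_ideal J" and IJ: "I \<inter> J = {0}"
    and xI: "x \<in> I" and yJ: "y \<in> J"
  shows "\<theta> \<in> Theta_hat \<Longrightarrow> \<phi> \<in> Theta_hat \<Longrightarrow>
         word_action \<theta> x * word_action \<phi> y = 0"
proof (induction "length \<theta> + length \<phi>" arbitrary: \<theta> \<phi> rule: less_induct)
  case less
  have IH: "\<And>\<theta>' \<phi>'. \<theta>' \<in> Theta_hat \<Longrightarrow> \<phi>' \<in> Theta_hat \<Longrightarrow>
              length \<theta>' + length \<phi>' < length \<theta> + length \<phi> \<Longrightarrow> word_action \<theta>' x * word_action \<phi>' y = 0"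
    using less.hyps by blast
  have IH2: "\<And>\<theta>' \<phi>'. \<theta>' \<in> Theta_hat \<Longrightarrow> \<phi>' \<in> Theta_hat \<Longrightarrow>
              length \<theta>' + length \<phi>' < length \<phi> + length \<theta> \<Longrightarrow> word_action \<theta>' y * word_action \<phi>' x = 0"
    using IH by (metis add.commute mult.commute)
  have 1: "word_action \<theta> x * word_action \<phi> y \<in> I"
    by (rule move[OF I xI IH]) (use less.prems in auto)
  have 2: "word_action \<phi> y * word_action \<theta> x \<in> J"
    by (rule move[OF J yJ IH2]) (use less.prems in auto)
  show ?case using 1 2 IJ by (auto simp: mult.commute)
qed

lemma bracket_prod:
  fixes a b :: "'a::comm_ring_1"
  assumes I: "is_ideal I" and J: "is_ideal J" and IJ: "I \<inter> J = {0}"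
    and a: "a \<in> bracket I" and b: "b \<in> bracket J"
  shows "a * b = 0"
  using a
proof induction
  case zero then show ?case by simp
next
  case (add a1 a2) then show ?case by (simp add: distrib_right)
next
  case (gen \<theta> x)
  from b show ?case
  proof induction
    case zero then show ?case by simp
  next
    case (add b1 b2) then show ?case by (simp add: distrib_left)
  next
    case (gen \<phi> y)
    then show ?case using prod_zero[OF I J IJ] \<open>\<theta> \<in> Theta_hat\<close> \<open>x \<in> I\<close> by blast
  qed
qed

theorem corollaryA16:
  fixes I J :: "'a::comm_ring_1 set"
  assumes "is_ideal I" and "is_ideal J" and "I \<inter> J = {0}"
  shows "bracket I \<inter> bracket J \<subseteq> Nil2"
proof
  fix z assume "z \<in> bracket I \<inter> bracket J"
  then have "z * z = 0" using bracket_prod[OF assms] by blast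
  then show "z \<in> Nil2" by (simp add: Nil2_def power2_eq_square)
qed

end
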